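(* Let $\mathcal{F}=(W,R)$ be a finite transitive frame and let $X_\mathcal{F}$ and $f:X_\mathcal{F}\to W$ be constructed as described in the context (for any admissible choice of the spaces $X_C$). Then $f$ is a $d$-morphism from $X_\mathcal{F}$ onto $\mathcal{F}$.
   Context: For a topological space $X$ and $Y\subseteq X$: $\mathrm{cl}_X Y$ is the closure; a point $x$ is a limit point of $Y$ if every set $O-\{x\}$ with $O$ an open neighbourhood of $x$ meets $Y$; $\mathrm{d}_X Y$ (the derived set) is the set of limit points of $Y$. $Y$ is dense in $X$ if $\mathrm{cl}_XY=X$. A subset $S$ is crowded in $X$ if $S\subseteq \mathrm{d}_X S$ (i.e. $S$ has no isolated points as a subspace). A partition of $X$ into cells is dense (resp. crowded) if every cell is dense in $X$ (resp. crowded). Frames: $\mathcal{F}=(W,R)$ with $R$ transitive. $R^*$ is the reflexive closure of $R$. A cluster is an equivalence class of the relation $\{(x,y): x=y \text{ or } xRyRx\}$; the cluster of $x$ is $C_x$. A cluster $C_x$ is degenerate if $x$ is irreflexive (then $C_x=\{x\}$), otherwise non-degenerate. $R$ lifts to clusters by $C_xRC_y$ iff $xRy$. Write $CR^{\uparrow}C'$ if $CRC'$ but not $C'RC$. The Alexandrov space $W_R$ is $W$ with topology whose open sets are the $R$-up-sets (sets $O$ with $w\in O, wRv\Rightarrow v\in O$). A $d$-morphism from a space $X$ to a transitive frame $\mathcal{F}=(W,R)$ is a function $f:X\to W$ such that (i) $f$ is continuous and open as a map $X\to W_R$; (ii) if $w$ is $R$-reflexive then $f^{-1}\{w\}$ is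 crowded in $X$; (iii) if $w$ is $R$-irreflexive then $f^{-1}\{w\}\cap \mathrm{d}_X f^{-1}\{w\}=\emptyset$. Construction of $X_\mathcal{F}$: let $\mathcal{F}=(W,R)$ be finite transitive with set of clusters $\mathscr{C}$. For each $C\in\mathscr{C}$ choose a space $X_C$ with a partition $\{X_w:w\in C\}$: if $C=\{w\}$ is degenerate, $X_C=X_w=\{w\}$ (one-point space); if $C=\{w_1,\dots,w_k\}$ is non-degenerate, $X_C$ is a space with a crowded dense $k$-partition whose cells are labelled $X_{w_1},\dots,X_{w_k}$. The $X_C$ are pairwise disjoint. Let $X_\mathcal{F}=\bigcup_{C\in\mathscr{C}}X_C$, where $O\subseteq X_\mathcal{F}$ is open iff for every $C\in\mathscr{C}$, $O\cap X_C$ is open in $X_C$, and if $O\cap X_C\neq\emptyset$ then $X_{C'}\subseteq O$ for every $C'$ with $CR^\uparrow C'$. Define $f:X_\mathcal{F}\to W$ by $f(x)=w$ iff $x\in X_w$. *)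

theory Defs
  imports "HOL-Analysis.Analysis"
begin

definition trans_frame :: "'w set \<Rightarrow> ('w \<Rightarrow> 'w \<Rightarrow> bool) \<Rightarrow> bool" where
  "trans_frame W R \<longleftrightarrow> (\<forall>x y. R x y \<longrightarrow> x \<in> W \<and> y \<in> W) \<and>
     (\<forall>x y z. R x y \<longrightarrow> R y z \<longrightarrow> R x z)"

definition cluster_of :: "'w set \<Rightarrow> ('w \<Rightarrow> 'w \<Rightarrow> bool) \<Rightarrow> 'w \<Rightarrow> 'w set" where
  "cluster_of W R x = {y \<in> W. y = x \<or> (R x y \<and> R y x)}"

definition clusters :: "'w set \<Rightarrow> ('w \<Rightarrow> 'w \<Rightarrow> bool) \<Rightarrow> 'w set set" where
  "clusters W R = cluster_of W R ` W"

text \<open>Lifted relation on clusters: C_x R C_y iff xRy (well defined by transitivity).\<close>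
definition cluster_rel :: "('w \<Rightarrow> 'w \<Rightarrow> bool) \<Rightarrow> 'w set \<Rightarrow> 'w set \<Rightarrow> bool" where
  "cluster_rel R C C' \<longleftrightarrow> (\<exists>x\<in>C. \<exists>y\<in>C'. R x y)"

definition cluster_rel_strict :: "('w \<Rightarrow> 'w \<Rightarrow> bool) \<Rightarrow> 'w set \<Rightarrow> 'w set \<Rightarrow> bool" where
  "cluster_rel_strict R C C' \<longleftrightarrow> cluster_rel R C C' \<and> \<not> cluster_rel R C' C"

definition alexandrov_top :: "'w set \<Rightarrow> ('w \<Rightarrow> 'w \<Rightarrow> bool) \<Rightarrow> 'w topology" where
  "alexandrov_top W R = topology (\<lambda>U. U \<subseteq> W \<and> (\<forall>w v. w \<in> U \<longrightarrow> R w v \<longrightarrow> v \<in> U))"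

definition crowded_in :: "'a topology \<Rightarrow> 'a set \<Rightarrow> bool" where
  "crowded_in X S \<longleftrightarrow> S \<subseteq> X derived_set_of S"

definition d_morphism :: "'a topology \<Rightarrow> 'w set \<Rightarrow> ('w \<Rightarrow> 'w \<Rightarrow> bool) \<Rightarrow> ('a \<Rightarrow> 'w) \<Rightarrow> bool" where
  "d_morphism X W R f \<longleftrightarrow>
     continuous_map X (alexandrov_top W R) f \<and>
     open_map X (alexandrov_top W R) f \<and>
     (\<forall>w\<in>W. R w w \<longrightarrow> crowded_in X {x \<in> topspace X. f x = w}) \<and>
     (\<forall>w\<in>W. \<not> R w w \<longrightarrow>
        {x \<in> topspace X. f x = w} \<inter> X derived_set_of {x \<in> topspace X. f x = w} = {})"

text \<open>Cells: X w for w in W (pairwise disjoint); for a cluster C, the space X_C is the topology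
  T C whose carrier is the union of the cells X w, w in C.\<close>
definition admissible_choice ::
  "'w set \<Rightarrow> ('w \<Rightarrow> 'w \<Rightarrow> bool) \<Rightarrow> ('w \<Rightarrow> 'a set) \<Rightarrow> ('w set \<Rightarrow> 'a topology) \<Rightarrow> bool" where
  "admissible_choice W R X T \<longleftrightarrow>
     (\<forall>v\<in>W. \<forall>w\<in>W. v \<noteq> w \<longrightarrow> X v \<inter> X w = {}) \<and>
     (\<forall>C\<in>clusters W R. topspace (T C) = (\<Union>w\<in>C. X w)) \<and>
     (\<forall>w\<in>W. \<not> R w w \<longrightarrow> (\<exists>a. X w = {a})) \<and>
     (\<forall>w\<in>W. R w w \<longrightarrow>
        X w \<noteq> {} \<and>
        (T (cluster_of W R w)) closure_of (X w) = topspace (T (cluster_of W R w)) \<and>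
        crowded_in (T (cluster_of W R w)) (X w))"

definition XF_open ::
  "'w set \<Rightarrow> ('w \<Rightarrow> 'w \<Rightarrow> bool) \<Rightarrow> ('w \<Rightarrow> 'a set) \<Rightarrow> ('w set \<Rightarrow> 'a topology) \<Rightarrow> 'a set \<Rightarrow> bool" where
  "XF_open W R X T U \<longleftrightarrow>
     U \<subseteq> (\<Union>C\<in>clusters W R. topspace (T C)) \<and>
     (\<forall>C\<in>clusters W R.
        openin (T C) (U \<inter> topspace (T C)) \<and>
        (U \<inter> topspace (T C) \<noteq> {} \<longrightarrow>
           (\<forall>C'\<in>clusters W R. cluster_rel_strict R C C' \<longrightarrow> topspace (T C') \<subseteq> U)))"

definition XF_top ::
  "'w set \<Rightarrow> ('w \<Rightarrow> 'w \<Rightarrow> bool) \<Rightarrow> ('w \<Rightarrow> 'a set) \<Rightarrow> ('w set \<Rightarrow> 'a topology) \<Rightarrow> 'a topology" where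
  "XF_top W R X T = topology (XF_open W R X T)"

definition XF_map :: "'w set \<Rightarrow> ('w \<Rightarrow> 'a set) \<Rightarrow> 'a \<Rightarrow> 'w" where
  "XF_map W X x = (THE w. w \<in> W \<and> x \<in> X w)"

end

theory Submission
  imports Defs
begin

lemma alex_open:
  "openin (alexandrov_top W R) U \<longleftrightarrow> U \<subseteq> W \<and> (\<forall>w v. w \<in> U \<longrightarrow> R w v \<longrightarrow> v \<in> U)"
proof -
  have "istopology (\<lambda>U. U \<subseteq> W \<and> (\<forall>w v. w \<in> U \<longrightarrow> R w v \<longrightarrow> v \<in> U))"
    unfolding istopology_def by blast
  then show ?thesis unfolding alexandrov_top_def by simp
qed

lemma alex_top:
  assumes "trans_frame W R"
  shows "topspace (alexandrov_top W R) = W"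
proof
  show "topspace (alexandrov_top W R) \<subseteq> W"
  proof
    fix x assume "x \<in> topspace (alexandrov_top W R)"
    then obtain U where "openin (alexandrov_top W R) U" "x \<in> U" unfolding topspace_def by blast
    then show "x \<in> W" unfolding alex_open by blast
  qed
  have "openin (alexandrov_top W R) W"
    unfolding alex_open using assms unfolding trans_frame_def by blast
  then show "W \<subseteq> topspace (alexandrov_top W R)" by (rule openin_subset)
qed

lemma XF_openin:
  assumes adm: "admissible_choice W R X T"
  shows "openin (XF_top W R X T) U \<longleftrightarrow> XF_open W R X T U"
proof -
  have "istopology (XF_open W R X T)"
    unfolding istopology_def
  proof (intro conjI allI impI)
    fix S U assume S: "XF_open W R X T S" and U: "XF_open W R X T U"
    show "XF_open W R X T (S \<inter> U)"
      unfolding XF_open_def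
    proof (intro conjI ballI impI)
      show "S \<inter> U \<subseteq> (\<Union>C\<in>clusters W R. topspace (T C))" using S unfolding XF_open_def by blast
    next
      fix C assume C: "C \<in> clusters W R"
      have "S \<inter> U \<inter> topspace (T C) = (S \<inter> topspace (T C)) \<inter> (U \<inter> topspace (T C))" by blast
      then show "openin (T C) (S \<inter> U \<inter> topspace (T C))"
        using S U C unfolding XF_open_def by (metis openin_Int)
    next
      fix C C' assume C: "C \<in> clusters W R" and ne: "S \<inter> U \<inter> topspace (T C) \<noteq> {}"
        and C': "C' \<in> clusters W R" "cluster_rel_strict R C C'"
      have "S \<inter> topspace (T C) \<noteq> {}" "U \<inter> topspace (T C) \<noteq> {}" using ne by blast+
      then show "topspace (T C') \<subseteq> S \<inter> U" using S U C C' unfolding XF_open_def by blast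
    qed
  next
    fix K assume K: "\<forall>S\<in>K. XF_open W R X T S"
    show "XF_open W R X T (\<Union>K)"
      unfolding XF_open_def
    proof (intro conjI ballI impI)
      show "\<Union>K \<subseteq> (\<Union>C\<in>clusters W R. topspace (T C))" using K unfolding XF_open_def by blast
    next
      fix C assume C: "C \<in> clusters W R"
      have "\<Union>K \<inter> topspace (T C) = \<Union>((\<lambda>S. S \<inter> topspace (T C)) ` K)" by blast
      moreover have "openin (T C) (\<Union>((\<lambda>S. S \<inter> topspace (T C)) ` K))"
        using K C unfolding XF_open_def by (intro openin_Union) auto
      ultimately show "openin (T C) (\<Union>K \<inter> topspace (T C))" by simp
    next
      fix C C' assume C: "C \<in> clusters W R" and ne: "\<Union>K \<inter> topspace (T C) \<noteq> {}"
        and C': "C' \<in> clusters W R" "cluster_rel_strict R C C'"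
      then obtain S where "S \<in> K" "S \<inter> topspace (T C) \<noteq> {}" by blast
      then show "topspace (T C') \<subseteq> \<Union>K" using K C C' unfolding XF_open_def by blast
    qed
  qed
  then show ?thesis unfolding XF_top_def by simp
qed

lemma cluster_self: "w \<in> W \<Longrightarrow> w \<in> cluster_of W R w"
  unfolding cluster_of_def by simp

lemma cluster_eq:
  assumes tf: "trans_frame W R" and v: "v \<in> cluster_of W R w"
  shows "cluster_of W R v = cluster_of W R w"
  using assms unfolding cluster_of_def trans_frame_def by blast

lemma irrefl_cluster:
  assumes tf: "trans_frame W R" and "\<not> R w w"
  shows "cluster_of W R w \<subseteq> {w}"
  using assms unfolding cluster_of_def trans_frame_def by blast

theorem lemma3:
  fixes W :: "'w set" and R :: "'w \<Rightarrow> 'w \<Rightarrow> bool"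
    and X :: "'w \<Rightarrow> 'a set" and T :: "'w set \<Rightarrow> 'a topology"
  assumes "finite W" and "trans_frame W R"
    and "admissible_choice W R X T"
  shows "d_morphism (XF_top W R X T) W R (XF_map W X) \<and>
         XF_map W X ` topspace (XF_top W R X T) = W"
proof -
  note tf = assms(2) and adm = assms(3)
  let ?Y = "XF_top W R X T" and ?f = "XF_map W X" and ?A = "alexandrov_top W R"
  let ?cl = "cluster_of W R"
  have disj: "\<And>v w. v \<in> W \<Longrightarrow> w \<in> W \<Longrightarrow> v \<noteq> w \<Longrightarrow> X v \<inter> X w = {}"
    using adm unfolding admissible_choice_def by blast
  have tsC: "\<And>w. w \<in> W \<Longrightarrow> topspace (T (?cl w)) = (\<Union>v\<in>?cl w. X v)"
    using adm unfolding admissible_choice_def clusters_def by blast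
  have nonempty: "\<And>w. w \<in> W \<Longrightarrow> X w \<noteq> {}"
    using adm unfolding admissible_choice_def by (metis empty_not_insert)
  have clW: "\<And>w. ?cl w \<subseteq> W" unfolding cluster_of_def by blast
  have fx: "\<And>w x. w \<in> W \<Longrightarrow> x \<in> X w \<Longrightarrow> ?f x = w"
    unfolding XF_map_def by (rule the_equality) (use disj in blast)+
  have uni: "(\<Union>C\<in>clusters W R. topspace (T C)) = (\<Union>w\<in>W. X w)"
  proof -
    have "(\<Union>C\<in>clusters W R. topspace (T C)) = (\<Union>w\<in>W. \<Union>v\<in>?cl w. X v)"
      unfolding clusters_def using tsC by auto
    also have "\<dots> = (\<Union>w\<in>W. X w)"
    proof (intro antisym subsetI)
      fix x assume "x \<in> (\<Union>w\<in>W. \<Union>v\<in>?cl w. X v)"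
      then obtain w v where "w \<in> W" "v \<in> ?cl w" "x \<in> X v" by blast
      then show "x \<in> (\<Union>w\<in>W. X w)" using clW by blast
    next
      fix x assume "x \<in> (\<Union>w\<in>W. X w)"
      then obtain w where "w \<in> W" "x \<in> X w" by blast
      then show "x \<in> (\<Union>w\<in>W. \<Union>v\<in>?cl w. X v)" using cluster_self[of w W R] by blast
    qed
    finally show ?thesis .
  qed
  have top: "topspace ?Y = (\<Union>w\<in>W. X w)"
  proof
    show "topspace ?Y \<subseteq> (\<Union>w\<in>W. X w)"
    proof
      fix x assume "x \<in> topspace ?Y"
      then obtain U where U: "openin ?Y U" "x \<in> U" unfolding topspace_def by blast
      then have "XF_open W R X T U" using XF_openin[OF adm] by blast
      then have "U \<subseteq> (\<Union>C\<in>clusters W R. topspace (T C))" unfolding XF_open_def by blast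
      then show "x \<in> (\<Union>w\<in>W. X w)" using U(2) uni by blast
    qed
    have "XF_open W R X T (\<Union>w\<in>W. X w)"
      unfolding XF_open_def uni[symmetric]
    proof (intro conjI ballI impI)
      fix C assume "C \<in> clusters W R"
      then have "(\<Union>C\<in>clusters W R. topspace (T C)) \<inter> topspace (T C) = topspace (T C)" by blast
      then show "openin (T C) ((\<Union>C\<in>clusters W R. topspace (T C)) \<inter> topspace (T C))" by simp
    qed auto
    then show "(\<Union>w\<in>W. X w) \<subseteq> topspace ?Y"
      using XF_openin[OF adm] by (metis openin_subset)
  qed
  have fiber: "\<And>w. w \<in> W \<Longrightarrow> {x \<in> topspace ?Y. ?f x = w} = X w"
    using top fx by auto
  have clusters_eq: "\<And>C. C \<in> clusters W R \<Longrightarrow> \<exists>w\<in>W. C = ?cl w"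
    unfolding clusters_def by blast
  have in_cl_rel: "\<And>w v. w \<in> W \<Longrightarrow> v \<in> ?cl w \<Longrightarrow> v = w \<or> (R w v \<and> R v w)"
    unfolding cluster_of_def by blast
  have cont: "continuous_map ?Y ?A ?f"
    unfolding continuous_map
  proof (intro conjI allI impI)
    show "?f ` topspace ?Y \<subseteq> topspace ?A"
      using top fx by (auto simp: alex_top[OF tf])
  next
    fix U assume "openin ?A U"
    then have U: "U \<subseteq> W" "\<And>w v. w \<in> U \<Longrightarrow> R w v \<Longrightarrow> v \<in> U" unfolding alex_open by blast+
    have pre: "{x \<in> topspace ?Y. ?f x \<in> U} = (\<Union>w\<in>U. X w)"
      using top fx U(1) by auto
    have "XF_open W R X T (\<Union>w\<in>U. X w)"
      unfolding XF_open_def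
    proof (intro conjI ballI impI)
      show "(\<Union>w\<in>U. X w) \<subseteq> (\<Union>C\<in>clusters W R. topspace (T C))" using uni U(1) by blast
    next
      fix C assume C: "C \<in> clusters W R"
      then obtain w where w: "w \<in> W" "C = ?cl w" using clusters_eq by blast
      show "openin (T C) ((\<Union>w\<in>U. X w) \<inter> topspace (T C))"
      proof (cases "(\<Union>w\<in>U. X w) \<inter> topspace (T C) = {}")
        case False
        then obtain u x where ux: "u \<in> U" "x \<in> X u" "x \<in> topspace (T C)" by blast
        then obtain v where v: "v \<in> C" "x \<in> X v" using tsC w by auto
        have "v \<in> W" using v w clW by blast
        have "u = v" using disj ux v U(1) \<open>v \<in> W\<close> by blast
        have "C \<subseteq> U"
        proof
          fix y assume "y \<in> C"
          then have "y \<in> ?cl v" using cluster_eq[OF tf] v w by metis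
          then show "y \<in> U" using in_cl_rel[OF \<open>v \<in> W\<close>] U(2) ux(1) \<open>u = v\<close> by blast
        qed
        then have "(\<Union>w\<in>U. X w) \<inter> topspace (T C) = topspace (T C)" using tsC w by auto
        then show ?thesis by simp
      qed simp
    next
      fix C C' assume C: "C \<in> clusters W R" and ne: "(\<Union>w\<in>U. X w) \<inter> topspace (T C) \<noteq> {}"
        and C': "C' \<in> clusters W R" "cluster_rel_strict R C C'"
      obtain w where w: "w \<in> W" "C = ?cl w" using clusters_eq C by blast
      obtain w' where w': "w' \<in> W" "C' = ?cl w'" using clusters_eq C' by blast
      obtain u x where ux: "u \<in> U" "x \<in> X u" "x \<in> topspace (T C)" using ne by blast
      then obtain v where v: "v \<in> C" "x \<in> X v" using tsC w by auto
      have "v \<in> W" using v w clW by blast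
      have "u = v" using disj ux v U(1) \<open>v \<in> W\<close> by blast
      obtain a b where ab: "a \<in> C" "b \<in> C'" "R a b"
        using C'(2) unfolding cluster_rel_strict_def cluster_rel_def by blast
      have "v \<in> ?cl a" "a \<in> W" using cluster_eq[OF tf] v ab w clW by blast+
      then have "R v b" using in_cl_rel ab tf unfolding trans_frame_def by metis
      then have "b \<in> U" using U(2) ux \<open>u = v\<close> by blast
      have "C' \<subseteq> U"
      proof
        fix y assume "y \<in> C'"
        then have "y \<in> ?cl b" "b \<in> W" using cluster_eq[OF tf] ab w' clW by blast+
        then show "y \<in> U" using in_cl_rel U(2) \<open>b \<in> U\<close> by metis
      qed
      then show "topspace (T C') \<subseteq> (\<Union>w\<in>U. X w)" using tsC w' by auto
    qed
    then show "openin ?Y {x \<in> topspace ?Y. ?f x \<in> U}"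
      using pre XF_openin[OF adm] by simp
  qed
  have opn: "open_map ?Y ?A ?f"
    unfolding open_map_def
  proof (intro allI impI)
    fix U assume "openin ?Y U"
    then have U: "XF_open W R X T U" using XF_openin[OF adm] by simp
    have Usub: "U \<subseteq> (\<Union>w\<in>W. X w)" using U uni unfolding XF_open_def by blast
    show "openin ?A (?f ` U)"
      unfolding alex_open
    proof (intro conjI allI impI)
      show "?f ` U \<subseteq> W" using Usub fx by auto
    next
      fix w v assume wU: "w \<in> ?f ` U" and Rwv: "R w v"
      then obtain x where x: "x \<in> U" "w = ?f x" by blast
      then obtain w0 where w0: "w0 \<in> W" "x \<in> X w0" using Usub by blast
      have "w = w0" using fx w0 x by simp
      have wW: "w \<in> W" "v \<in> W" using Rwv tf unfolding trans_frame_def by blast+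
      have Cw: "?cl w \<in> clusters W R" "?cl v \<in> clusters W R" using wW unfolding clusters_def by blast+
      have "x \<in> X w" using w0 \<open>w = w0\<close> by simp
      moreover have "w \<in> ?cl w" using cluster_self[OF wW(1)] .
      ultimately have "x \<in> topspace (T (?cl w))" using tsC[OF wW(1)] by blast
      then have xC: "x \<in> U \<inter> topspace (T (?cl w))" using x(1) by blast
      show "v \<in> ?f ` U"
      proof (cases "R v w")
        case True
        then have "v \<in> ?cl w" unfolding cluster_of_def using Rwv wW by blast
        then have clv: "?cl v = ?cl w" using cluster_eq[OF tf] by blast
        have "R v v" using True Rwv tf unfolding trans_frame_def by blast
        then have dense: "(T (?cl w)) closure_of (X v) = topspace (T (?cl w))"
          using adm wW clv unfolding admissible_choice_def by metis
        have op: "openin (T (?cl w)) (U \<inter> topspace (T (?cl w)))"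
          using U Cw unfolding XF_open_def by blast
        obtain y where "y \<in> X v" "y \<in> U \<inter> topspace (T (?cl w))"
        proof -
          have "x \<in> (T (?cl w)) closure_of (X v)" using xC dense by blast
          then have "\<forall>S. x \<in> S \<and> openin (T (?cl w)) S \<longrightarrow> (\<exists>y\<in>X v. y \<in> S)"
            unfolding in_closure_of by blast
          then have "\<exists>y\<in>X v. y \<in> U \<inter> topspace (T (?cl w))" using xC op by blast
          then show ?thesis using that by blast
        qed
        then show ?thesis using fx wW by (metis IntD1 image_eqI)
      next
        case False
        have "cluster_rel_strict R (?cl w) (?cl v)"
          unfolding cluster_rel_strict_def cluster_rel_def
        proof
          show "\<exists>x\<in>?cl w. \<exists>y\<in>?cl v. R x y" using Rwv cluster_self[OF wW(1)] cluster_self[OF wW(2)] by blast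
          show "\<not> (\<exists>x\<in>?cl v. \<exists>y\<in>?cl w. R x y)"
          proof
            assume "\<exists>x\<in>?cl v. \<exists>y\<in>?cl w. R x y"
            then obtain a b where ab: "a \<in> ?cl v" "b \<in> ?cl w" "R a b" by blast
            have "R v b" using in_cl_rel[OF wW(2) ab(1)] ab(3) tf unfolding trans_frame_def by metis
            then have "R v w" using in_cl_rel[OF wW(1) ab(2)] tf unfolding trans_frame_def by metis
            then show False using False by simp
          qed
        qed
        then have "topspace (T (?cl v)) \<subseteq> U" using U Cw xC unfolding XF_open_def by blast
        moreover have "v \<in> ?cl v" using cluster_self[OF wW(2)] .
        ultimately have "X v \<subseteq> U" using tsC[OF wW(2)] by blast
        moreover obtain y where "y \<in> X v" using nonempty wW by blast
        ultimately show ?thesis using fx wW by (metis image_eqI subsetD)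
      qed
    qed
  qed
  have crowd: "\<forall>w\<in>W. R w w \<longrightarrow> crowded_in ?Y {x \<in> topspace ?Y. ?f x = w}"
  proof (intro ballI impI)
    fix w assume wW: "w \<in> W" and Rww: "R w w"
    have cr: "crowded_in (T (?cl w)) (X w)"
      using adm wW Rww unfolding admissible_choice_def by blast
    have Cw: "?cl w \<in> clusters W R" using wW unfolding clusters_def by blast
    show "crowded_in ?Y {x \<in> topspace ?Y. ?f x = w}"
      unfolding fiber[OF wW] crowded_in_def
    proof
      fix x assume xw: "x \<in> X w"
      show "x \<in> ?Y derived_set_of X w"
        unfolding derived_set_of_def
      proof (intro CollectI conjI allI impI)
        show "x \<in> topspace ?Y" using top xw wW by blast
      next
        fix U assume "x \<in> U \<and> openin ?Y U"
        then have xU: "x \<in> U" and U: "XF_open W R X T U" using XF_openin[OF adm] by auto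
        have op: "openin (T (?cl w)) (U \<inter> topspace (T (?cl w)))"
          using U Cw unfolding XF_open_def by blast
        have "w \<in> ?cl w" using cluster_self[OF wW] .
        then have "x \<in> U \<inter> topspace (T (?cl w))" using xU xw tsC[OF wW] by blast
        then show "\<exists>y. y \<noteq> x \<and> y \<in> X w \<and> y \<in> U"
          using cr xw op unfolding crowded_in_def derived_set_of_def by blast
      qed
    qed
  qed
  have irr: "\<forall>w\<in>W. \<not> R w w \<longrightarrow>
        {x \<in> topspace ?Y. ?f x = w} \<inter> ?Y derived_set_of {x \<in> topspace ?Y. ?f x = w} = {}"
  proof (intro ballI impI)
    fix w assume wW: "w \<in> W" and "\<not> R w w"
    have sing: "\<forall>w\<in>W. \<not> R w w \<longrightarrow> (\<exists>a. X w = {a})"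
      using adm unfolding admissible_choice_def by (elim conjE) assumption
    then obtain a where a: "X w = {a}" using wW \<open>\<not> R w w\<close> by blast
    show "{x \<in> topspace ?Y. ?f x = w} \<inter> ?Y derived_set_of {x \<in> topspace ?Y. ?f x = w} = {}"
    proof -
      have "a \<notin> ?Y derived_set_of {a}"
      proof
        assume "a \<in> ?Y derived_set_of {a}"
        then have "a \<in> topspace ?Y" "\<forall>S. a \<in> S \<and> openin ?Y S \<longrightarrow> (\<exists>y. y \<noteq> a \<and> y \<in> {a} \<and> y \<in> S)"
          unfolding in_derived_set_of by blast+
        then show False using openin_topspace[of ?Y] by blast
      qed
      then show ?thesis unfolding fiber[OF wW] a by blast
    qed
  qed
  have surj: "?f ` topspace ?Y = W"
  proof
    show "?f ` topspace ?Y \<subseteq> W" using top fx by auto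
    show "W \<subseteq> ?f ` topspace ?Y"
    proof
      fix w assume wW: "w \<in> W"
      then obtain y where "y \<in> X w" using nonempty by blast
      then show "w \<in> ?f ` topspace ?Y" using top fx wW by (metis UN_I image_eqI)
    qed
  qed
  show ?thesis unfolding d_morphism_def using cont opn crowd irr surj by blast
qed

end
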